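(* Let $B:\Sigma^*\to\Sigma^*$ be a limit computable function. There is a constant $c>0$ depending only on $B$ such that for all $z\in\Sigma^*$, $$\mathbf{m}(z\mid\mathcal{H}) \ge c\sum_{x:\,B(x)=z}\mathbf{m}(x).$$
   Context: $\Sigma=\{0,1\}$, $\Sigma^*$ the finite binary strings, $\perp$ the empty string. $\mathbf{m}(x\mid y)$ is a fixed universal (maximal up to a multiplicative constant among $y$-semicomputable semi-measures) semi-measure on $\Sigma^*$ relativized to $y$, where $y$ may be a finite string or infinite sequence; $\mathbf{m}(x)=\mathbf{m}(x\mid\perp)$. A semi-measure is $p:\Sigma^*\to\mathbb{R}_{\ge0}$ with $\sum_{x\ne\perp}p(x)\le 1$. $\mathcal{H}$ is the halting sequence, the characteristic sequence of the domain of the fixed universal prefix-free machine. A function $B:\Sigma^*\to\Sigma^*$ is limit computable if some Turing machine $T$, whenever $B(x)\ne\perp$, on input $x$ eventually writes $B(x)$ on its output tape and never changes it afterward (halting or not); when $B(x)=\perp$, $T$ eventually outputs nothing or changes its output forever. *)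

theory Defs
  imports "HOL-Analysis.Analysis"
begin

fun enc :: "bool list \<Rightarrow> nat" where
  "enc [] = 0"
| "enc (b # bs) = 2 * enc bs + (if b then 2 else 1)"

function dec :: "nat \<Rightarrow> bool list" where
  "dec n = (if n = 0 then [] else if odd n then False # dec ((n - 1) div 2)
            else True # dec ((n - 2) div 2))"
  by auto
termination by (relation "Wellfounded.measure id") auto

declare dec.simps[simp del]

datatype recf = Zf | Sf | Proj nat | Comp recf "recf list" | Prim recf recf | Mn recf | Orc

inductive evalr :: "(nat \<Rightarrow> bool) \<Rightarrow> recf \<Rightarrow> nat list \<Rightarrow> nat \<Rightarrow> bool" for Or where
  zero: "evalr Or Zf xs 0"
| succ: "evalr Or Sf (x # xs) (Suc x)"
| proj: "i < length xs \<Longrightarrow> evalr Or (Proj i) xs (xs ! i)"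
| orc: "evalr Or Orc (x # xs) (if Or x then 1 else 0)"
| comp: "list_all2 (\<lambda>g y. evalr Or g xs y) gs ys \<Longrightarrow> evalr Or f ys z \<Longrightarrow> evalr Or (Comp f gs) xs z"
| prim0: "evalr Or f xs y \<Longrightarrow> evalr Or (Prim f g) (0 # xs) y"
| primS: "evalr Or (Prim f g) (n # xs) y \<Longrightarrow> evalr Or g (n # y # xs) z \<Longrightarrow>
          evalr Or (Prim f g) (Suc n # xs) z"
| mn: "evalr Or f (n # xs) 0 \<Longrightarrow> (\<forall>m<n. \<exists>k. evalr Or f (m # xs) (Suc k)) \<Longrightarrow>
       evalr Or (Mn f) xs n"

definition no_oracle :: "nat \<Rightarrow> bool" where "no_oracle = (\<lambda>_. False)"

definition partial_comp_str :: "(nat \<Rightarrow> bool) \<Rightarrow> (bool list \<Rightarrow> bool list option) \<Rightarrow> bool" where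
  "partial_comp_str Or F \<longleftrightarrow> (\<exists>r. \<forall>x y. evalr Or r [enc x] y \<longleftrightarrow> (\<exists>s. F x = Some s \<and> y = enc s))"

definition total_comp_str_nat_nat :: "(nat \<Rightarrow> bool) \<Rightarrow> (bool list \<Rightarrow> nat \<Rightarrow> nat) \<Rightarrow> bool" where
  "total_comp_str_nat_nat Or g \<longleftrightarrow> (\<exists>r. \<forall>x t y. evalr Or r [enc x, t] y \<longleftrightarrow> y = g x t)"

definition prefix_free_dom :: "(bool list \<Rightarrow> bool list option) \<Rightarrow> bool" where
  "prefix_free_dom T \<longleftrightarrow> (\<forall>p q. T p \<noteq> None \<longrightarrow> T q \<noteq> None \<longrightarrow> (\<exists>r. q = p @ r) \<longrightarrow> p = q)"

definition universal_pf_machine :: "(bool list \<Rightarrow> bool list option) \<Rightarrow> bool" where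
  "universal_pf_machine U \<longleftrightarrow> partial_comp_str no_oracle U \<and> prefix_free_dom U \<and>
     (\<forall>T. partial_comp_str no_oracle T \<and> prefix_free_dom T \<longrightarrow>
        (\<exists>w. \<forall>x. U (w @ x) = T x))"

definition halting_seq :: "(bool list \<Rightarrow> bool list option) \<Rightarrow> nat \<Rightarrow> bool" where
  "halting_seq U = (\<lambda>n. U (dec n) \<noteq> None)"

definition semimeasure :: "(bool list \<Rightarrow> real) \<Rightarrow> bool" where
  "semimeasure p \<longleftrightarrow> (\<forall>x. p x \<ge> 0) \<and> p summable_on (UNIV - {[]}) \<and>
     infsum p (UNIV - {[]}) \<le> 1"

definition lower_semicomp :: "(nat \<Rightarrow> bool) \<Rightarrow> (bool list \<Rightarrow> real) \<Rightarrow> bool" where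
  "lower_semicomp Or p \<longleftrightarrow> (\<exists>a b. total_comp_str_nat_nat Or a \<and> total_comp_str_nat_nat Or b \<and>
     (\<forall>x. incseq (\<lambda>t. real (a x t) / real (b x t + 1)) \<and>
          (\<lambda>t. real (a x t) / real (b x t + 1)) \<longlonglongrightarrow> p x))"

definition universal_semimeasure :: "(nat \<Rightarrow> bool) \<Rightarrow> (bool list \<Rightarrow> real) \<Rightarrow> bool" where
  "universal_semimeasure Or m \<longleftrightarrow> semimeasure m \<and> lower_semicomp Or m \<and>
     (\<forall>p. semimeasure p \<and> lower_semicomp Or p \<longrightarrow> (\<exists>c>0. \<forall>x. m x \<ge> c * p x))"

text \<open>g x t is the content of the output tape of T on input x at step t (computable).
  B x is the eventual stable output, or the empty string if the output never stabilizes.\<close>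
definition limit_computable :: "(bool list \<Rightarrow> bool list) \<Rightarrow> bool" where
  "limit_computable B \<longleftrightarrow> (\<exists>g :: bool list \<Rightarrow> nat \<Rightarrow> bool list.
     total_comp_str_nat_nat no_oracle (\<lambda>x t. enc (g x t)) \<and>
     (\<forall>x. if (\<exists>v t0. \<forall>t\<ge>t0. g x t = v) then (\<exists>t0. \<forall>t\<ge>t0. g x t = B x) else B x = []))"

end

theory Submission
  imports Defs
begin

lemma enc_dec[simp]: "enc (dec n) = n"
proof (induction n rule: less_induct)
  case (less n)
  show ?case
  proof (cases "n = 0")
    case True then show ?thesis by (simp add: dec.simps)
  next
    case False
    show ?thesis
    proof (cases "odd n")
      case True
      then obtain k where k: "n = 2 * k + 1" by (blast elim: oddE)
      have d: "dec n = False # dec k" using k by (subst dec.simps) simp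
      have "k < n" using k by simp
      then show ?thesis using less d k by simp
    next
      case F2: False
      then obtain k0 where k0: "n = 2 * k0" by (blast elim: evenE)
      with False obtain k where k: "n = 2 * k + 2" by (cases k0) auto
      have d: "dec n = True # dec k" using k by (subst dec.simps) simp
      have "k < n" using k by simp
      then show ?thesis using less d k by simp
    qed
  qed
qed

lemma dec_enc[simp]: "dec (enc s) = s"
proof (induction s)
  case Nil then show ?case by (simp add: dec.simps)
next
  case (Cons b bs)
  show ?case
  proof (cases b)
    case True
    have "dec (enc (b # bs)) = True # dec (enc bs)"
      using True by (subst dec.simps) simp
    then show ?thesis using Cons True by simp
  next
    case False
    have "dec (enc (b # bs)) = False # dec (enc bs)"
      using False by (subst dec.simps) simp
    then show ?thesis using Cons False by simp
  qed
qed

lemma enc_inj: "enc a = enc b \<Longrightarrow> a = b"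
  by (metis dec_enc)

lemma enc_append: "enc (w @ s) = enc w + 2 ^ length w * enc s"
  by (induction w) auto

lemma enc_rep: "enc (replicate k False @ [True]) = 3 * 2 ^ k - 1"
proof (induction k)
  case 0 then show ?case by simp
next
  case (Suc k)
  have "(1::nat) \<le> 2 ^ k" by simp
  hence "(2::nat) \<le> 6 * 2 ^ k" by linarith
  then show ?case using Suc by (simp add: algebra_simps, linarith)
qed


inductive_cases evZ: "evalr Or Zf xs y"
inductive_cases evS: "evalr Or Sf xs y"
inductive_cases evP: "evalr Or (Proj i) xs y"
inductive_cases evO: "evalr Or Orc xs y"
inductive_cases evC: "evalr Or (Comp f gs) xs y"
inductive_cases evPr: "evalr Or (Prim f g) xs y"
inductive_cases evM: "evalr Or (Mn f) xs y"

definition cmp :: "(nat \<Rightarrow> bool) \<Rightarrow> nat \<Rightarrow> recf \<Rightarrow> (nat list \<Rightarrow> nat) \<Rightarrow> bool" where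
  "cmp Or k r F \<longleftrightarrow> (\<forall>xs y. length xs = k \<longrightarrow> (evalr Or r xs y \<longleftrightarrow> y = F xs))"

lemma cmpD: "cmp Or k r F \<Longrightarrow> length xs = k \<Longrightarrow> evalr Or r xs y \<longleftrightarrow> y = F xs"
  unfolding cmp_def by blast

lemma cmp_cong: "cmp Or k r F \<Longrightarrow> (\<And>xs. length xs = k \<Longrightarrow> F xs = G xs) \<Longrightarrow> cmp Or k r G"
  unfolding cmp_def by metis

lemma cmp_Zf: "cmp Or k Zf (\<lambda>_. 0)"
  unfolding cmp_def by (auto elim: evZ intro: evalr.zero)

lemma cmp_Sf: "cmp Or (Suc 0) Sf (\<lambda>xs. Suc (hd xs))"
  unfolding cmp_def by (auto elim!: evS intro: evalr.succ simp: length_Suc_conv)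

lemma cmp_Proj: "i < k \<Longrightarrow> cmp Or k (Proj i) (\<lambda>xs. xs ! i)"
  unfolding cmp_def by (auto elim!: evP intro: evalr.proj)

lemma cmp_Orc: "cmp Or (Suc 0) Orc (\<lambda>xs. if Or (hd xs) then 1 else 0)"
proof -
  have h: "evalr Or Orc [x] (if Or x then 1 else 0)" for x by (rule evalr.orc)
  show ?thesis unfolding cmp_def
  proof (intro allI impI)
    fix xs :: "nat list" and y assume "length xs = Suc 0"
    then obtain x where "xs = [x]" by (auto simp: length_Suc_conv)
    show "evalr Or Orc xs y = (y = (if Or (hd xs) then 1 else 0))" 
    proof
      assume "evalr Or Orc xs y" then show "y = (if Or (hd xs) then 1 else 0)" using \<open>xs = [x]\<close> by (auto elim!: evO)
    next
      assume "y = (if Or (hd xs) then 1 else 0)" then show "evalr Or Orc xs y" using \<open>xs = [x]\<close> h[of x] by simp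
    qed
  qed
qed

lemma la2_unique:
  assumes "list_all2 (\<lambda>g G. cmp Or k g G) gs Gs" "length xs = k"
  shows "list_all2 (\<lambda>g y. evalr Or g xs y) gs ys \<longleftrightarrow> ys = map (\<lambda>G. G xs) Gs"
  using assms
proof (induction gs arbitrary: Gs ys)
  case Nil then show ?case by auto
next
  case (Cons g gs)
  then obtain G Gs' where G: "Gs = G # Gs'" "cmp Or k g G" "list_all2 (\<lambda>g G. cmp Or k g G) gs Gs'"
    by (auto simp: list_all2_Cons1)
  show ?case
  proof (cases ys)
    case Nil then show ?thesis using G by simp
  next
    case (Cons y ys')
    then show ?thesis using G Cons.IH[of Gs' ys'] cmpD[OF G(2) Cons.prems(2)] Cons.prems by auto
  qed
qed

lemma cmp_Comp:
  assumes "cmp Or (length gs) h H" "list_all2 (\<lambda>g G. cmp Or k g G) gs Gs"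
  shows "cmp Or k (Comp h gs) (\<lambda>xs. H (map (\<lambda>G. G xs) Gs))"
  unfolding cmp_def
proof (intro allI impI)
  fix xs :: "nat list" and y assume l: "length xs = k"
  have len: "length (map (\<lambda>G. G xs) Gs) = length gs" using assms(2) by (simp add: list_all2_lengthD)
  show "evalr Or (Comp h gs) xs y = (y = H (map (\<lambda>G. G xs) Gs))"
  proof
    assume "evalr Or (Comp h gs) xs y"
    then obtain ys where "list_all2 (\<lambda>g y. evalr Or g xs y) gs ys" "evalr Or h ys y" by (blast elim: evC)
    then show "y = H (map (\<lambda>G. G xs) Gs)" using la2_unique[OF assms(2) l] cmpD[OF assms(1) len] by auto
  next
    assume "y = H (map (\<lambda>G. G xs) Gs)"
    then show "evalr Or (Comp h gs) xs y"
      using la2_unique[OF assms(2) l] cmpD[OF assms(1) len] by (auto intro: evalr.comp)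
  qed
qed

lemma cmp_Comp1: "cmp Or (Suc 0) h H \<Longrightarrow> cmp Or k g1 G1 \<Longrightarrow> cmp Or k (Comp h [g1]) (\<lambda>xs. H [G1 xs])"
  using cmp_Comp[of Or "[g1]" h H k "[G1]"] by simp
lemma cmp_Comp2: "cmp Or (Suc (Suc 0)) h H \<Longrightarrow> cmp Or k g1 G1 \<Longrightarrow> cmp Or k g2 G2 \<Longrightarrow>
   cmp Or k (Comp h [g1, g2]) (\<lambda>xs. H [G1 xs, G2 xs])"
  using cmp_Comp[of Or "[g1, g2]" h H k "[G1, G2]"] by (simp add: numeral_2_eq_2)
lemma cmp_Comp3: "cmp Or (Suc (Suc (Suc 0))) h H \<Longrightarrow> cmp Or k g1 G1 \<Longrightarrow> cmp Or k g2 G2 \<Longrightarrow> cmp Or k g3 G3 \<Longrightarrow>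
   cmp Or k (Comp h [g1, g2, g3]) (\<lambda>xs. H [G1 xs, G2 xs, G3 xs])"
  using cmp_Comp[of Or "[g1, g2, g3]" h H k "[G1, G2, G3]"] by (simp add: numeral_3_eq_3)

fun primR :: "(nat list \<Rightarrow> nat) \<Rightarrow> (nat list \<Rightarrow> nat) \<Rightarrow> nat \<Rightarrow> nat list \<Rightarrow> nat" where
  "primR F G 0 xs = F xs"
| "primR F G (Suc n) xs = G (n # primR F G n xs # xs)"

lemma cmp_Prim:
  assumes "cmp Or k f F" "cmp Or (Suc (Suc k)) g G"
  shows "cmp Or (Suc k) (Prim f g) (\<lambda>xs. primR F G (hd xs) (tl xs))"
proof -
  have main: "length xs = k \<Longrightarrow> evalr Or (Prim f g) (n # xs) y \<longleftrightarrow> y = primR F G n xs" for n and xs :: "nat list" and y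
  proof (induction n arbitrary: y)
    case 0
    show ?case
    proof
      assume "evalr Or (Prim f g) (0 # xs) y"
      then show "y = primR F G 0 xs" using cmpD[OF assms(1) 0] by (auto elim: evPr)
    next
      assume "y = primR F G 0 xs"
      then show "evalr Or (Prim f g) (0 # xs) y" using cmpD[OF assms(1) 0] by (auto intro: evalr.prim0)
    qed
  next
    case (Suc n)
    have l2: "length (n # primR F G n xs # xs) = Suc (Suc k)" using Suc.prems by simp
    show ?case
    proof
      assume "evalr Or (Prim f g) (Suc n # xs) y"
      then obtain y' where "evalr Or (Prim f g) (n # xs) y'" "evalr Or g (n # y' # xs) y"
        by (auto elim: evPr)
      then show "y = primR F G (Suc n) xs" using Suc cmpD[OF assms(2) l2] by auto
    next
      assume "y = primR F G (Suc n) xs"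
      then show "evalr Or (Prim f g) (Suc n # xs) y" using Suc cmpD[OF assms(2) l2]
        by (auto intro: evalr.primS)
    qed
  qed
  show ?thesis unfolding cmp_def
  proof (intro allI impI)
    fix xs :: "nat list" and y assume "length xs = Suc k"
    then obtain n xs' where "xs = n # xs'" "length xs' = k" by (cases xs) auto
    then show "evalr Or (Prim f g) xs y = (y = primR F G (hd xs) (tl xs))" using main by simp
  qed
qed

lemma Mn_sem:
  fixes xs :: "nat list"
  assumes "cmp Or (Suc k) f F" "length xs = k"
  shows "evalr Or (Mn f) xs n \<longleftrightarrow> F (n # xs) = 0 \<and> (\<forall>m<n. F (m # xs) \<noteq> 0)"
proof
  assume "evalr Or (Mn f) xs n"
  then show "F (n # xs) = 0 \<and> (\<forall>m<n. F (m # xs) \<noteq> 0)"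
    using cmpD[OF assms(1)] assms(2) by (fastforce elim!: evM)
next
  assume a: "F (n # xs) = 0 \<and> (\<forall>m<n. F (m # xs) \<noteq> 0)"
  have "\<forall>m<n. \<exists>k. evalr Or f (m # xs) (Suc k)"
  proof (intro allI impI)
    fix m assume "m < n"
    then have "F (m # xs) \<noteq> 0" using a by blast
    then obtain j where "F (m # xs) = Suc j" using not0_implies_Suc by blast
    then show "\<exists>k. evalr Or f (m # xs) (Suc k)" using cmpD[OF assms(1)] assms(2) by auto
  qed
  then show "evalr Or (Mn f) xs n" using a cmpD[OF assms(1)] assms(2) by (auto intro: evalr.mn)
qed


fun constp :: "nat \<Rightarrow> recf" where
  "constp 0 = Zf"
| "constp (Suc c) = Comp Sf [constp c]"

lemma cmp_const: "cmp Or k (constp c) (\<lambda>_. c)"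
proof (induction c)
  case 0 then show ?case using cmp_Zf by simp
next
  case (Suc c)
  show ?case using cmp_Comp1[OF cmp_Sf Suc] by simp
qed

lemma cmp_Proj0: "cmp Or (Suc k) (Proj 0) (\<lambda>xs. xs ! 0)" by (rule cmp_Proj) simp
lemma cmp_Proj1: "cmp Or (Suc (Suc k)) (Proj 1) (\<lambda>xs. xs ! 1)" by (rule cmp_Proj) simp
lemma cmp_Proj2: "cmp Or (Suc (Suc (Suc k))) (Proj 2) (\<lambda>xs. xs ! 2)" by (rule cmp_Proj) simp
lemma cmp_Proj3: "cmp Or (Suc (Suc (Suc (Suc k)))) (Proj 3) (\<lambda>xs. xs ! 3)" by (rule cmp_Proj) simp
lemma cmp_Proj4: "cmp Or (Suc (Suc (Suc (Suc (Suc k))))) (Proj 4) (\<lambda>xs. xs ! 4)" by (rule cmp_Proj) simp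

definition addp :: recf where "addp = Prim (Proj 0) (Comp Sf [Proj 1])"

lemma cmp_addp: "cmp Or (Suc (Suc 0)) addp (\<lambda>xs. xs ! 0 + xs ! 1)"
proof -
  have c: "cmp Or (Suc (Suc 0)) addp (\<lambda>xs. primR (\<lambda>xs. xs ! 0) (\<lambda>xs. Suc (xs ! 1)) (hd xs) (tl xs))"
    unfolding addp_def
    by (rule cmp_Prim[OF cmp_Proj0]) (rule cmp_cong[OF cmp_Comp1[OF cmp_Sf cmp_Proj1]], simp)
  have r: "primR (\<lambda>xs. xs ! 0) (\<lambda>xs. Suc (xs ! 1)) n xs = n + xs ! 0" for n xs
    by (induction n) auto
  show ?thesis
    by (rule cmp_cong[OF c[simplified]]) (auto simp: r r[simplified] length_Suc_conv)
qed

lemma cmp_add: "cmp Or k a A \<Longrightarrow> cmp Or k b B \<Longrightarrow> cmp Or k (Comp addp [a, b]) (\<lambda>xs. A xs + B xs)"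
  using cmp_Comp2[OF cmp_addp] by simp

definition mulp :: recf where "mulp = Prim Zf (Comp addp [Proj 1, Proj 2])"

lemma cmp_mulp: "cmp Or (Suc (Suc 0)) mulp (\<lambda>xs. xs ! 0 * xs ! 1)"
proof -
  have c: "cmp Or (Suc (Suc 0)) mulp (\<lambda>xs. primR (\<lambda>xs. 0) (\<lambda>xs. xs ! 1 + xs ! 2) (hd xs) (tl xs))"
    unfolding mulp_def
    by (rule cmp_Prim[OF cmp_Zf]) (rule cmp_add[OF cmp_Proj1 cmp_Proj2])
  have r: "primR (\<lambda>xs. 0) (\<lambda>xs. xs ! 1 + xs ! 2) n xs = n * xs ! 0" for n xs
    by (induction n) auto
  show ?thesis
    by (rule cmp_cong[OF c[simplified]]) (auto simp: r r[simplified] length_Suc_conv)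
qed

lemma cmp_mult: "cmp Or k a A \<Longrightarrow> cmp Or k b B \<Longrightarrow> cmp Or k (Comp mulp [a, b]) (\<lambda>xs. A xs * B xs)"
  using cmp_Comp2[OF cmp_mulp] by simp

definition predp :: recf where "predp = Prim Zf (Proj 0)"

lemma cmp_predp: "cmp Or (Suc 0) predp (\<lambda>xs. xs ! 0 - 1)"
proof -
  have c: "cmp Or (Suc 0) predp (\<lambda>xs. primR (\<lambda>xs. 0) (\<lambda>xs. xs ! 0) (hd xs) (tl xs))"
    unfolding predp_def
    by (rule cmp_Prim[OF cmp_Zf]) (rule cmp_Proj0)
  have r: "primR (\<lambda>xs. 0) (\<lambda>xs. xs ! 0) n xs = n - 1" for n xs
    by (cases n) auto
  show ?thesis
    by (rule cmp_cong[OF c]) (auto simp: r r[simplified] length_Suc_conv)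
qed

definition subp0 :: recf where "subp0 = Prim (Proj 0) (Comp predp [Proj 1])"

lemma cmp_subp0: "cmp Or (Suc (Suc 0)) subp0 (\<lambda>xs. xs ! 1 - xs ! 0)"
proof -
  have c: "cmp Or (Suc (Suc 0)) subp0 (\<lambda>xs. primR (\<lambda>xs. xs ! 0) (\<lambda>xs. xs ! 1 - 1) (hd xs) (tl xs))"
    unfolding subp0_def
    by (rule cmp_Prim[OF cmp_Proj0]) (rule cmp_cong[OF cmp_Comp1[OF cmp_predp cmp_Proj1]], simp)
  have r: "primR (\<lambda>xs. xs ! 0) (\<lambda>xs. xs ! 1 - 1) n xs = xs ! 0 - n" for n xs
    by (induction n) auto
  show ?thesis
    by (rule cmp_cong[OF c[simplified]]) (auto simp: r r[simplified] length_Suc_conv)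
qed

lemma cmp_sub: "cmp Or k a A \<Longrightarrow> cmp Or k b B \<Longrightarrow> cmp Or k (Comp subp0 [b, a]) (\<lambda>xs. A xs - B xs)"
  using cmp_Comp2[OF cmp_subp0] by simp

definition sgp :: recf where "sgp = Prim Zf (constp 1)"

lemma cmp_sgp: "cmp Or (Suc 0) sgp (\<lambda>xs. if xs ! 0 = 0 then 0 else 1)"
proof -
  have c: "cmp Or (Suc 0) sgp (\<lambda>xs. primR (\<lambda>xs. 0) (\<lambda>xs. 1) (hd xs) (tl xs))"
    unfolding sgp_def
    by (rule cmp_Prim[OF cmp_Zf]) (rule cmp_const)
  have r: "primR (\<lambda>xs. 0) (\<lambda>xs. 1) n xs = (if n = 0 then 0 else 1)" for n xs
    by (cases n) auto
  show ?thesis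
    by (rule cmp_cong[OF c]) (auto simp: r[simplified] length_Suc_conv)
qed

lemma cmp_sg: "cmp Or k a A \<Longrightarrow> cmp Or k (Comp sgp [a]) (\<lambda>xs. if A xs = 0 then 0 else 1)"
  using cmp_Comp1[OF cmp_sgp] by simp

definition notp :: "recf \<Rightarrow> recf" where "notp a = Comp subp0 [Comp sgp [a], constp 1]"

lemma cmp_not: "cmp Or k a A \<Longrightarrow> cmp Or k (notp a) (\<lambda>xs. if A xs = 0 then 1 else 0)"
  unfolding notp_def
  by (rule cmp_cong[OF cmp_sub[OF cmp_const cmp_sg]]) auto

definition eqp :: "recf \<Rightarrow> recf \<Rightarrow> recf" where
  "eqp a b = notp (Comp addp [Comp subp0 [b, a], Comp subp0 [a, b]])"

lemma cmp_eq: "cmp Or k a A \<Longrightarrow> cmp Or k b B \<Longrightarrow> cmp Or k (eqp a b) (\<lambda>xs. if A xs = B xs then 1 else 0)"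
  unfolding eqp_def
  by (rule cmp_cong[OF cmp_not[OF cmp_add[OF cmp_sub cmp_sub]]]) auto

definition pow2p :: recf where "pow2p = Prim (constp 1) (Comp mulp [Proj 1, constp 2])"

lemma cmp_pow2p: "cmp Or (Suc 0) pow2p (\<lambda>xs. 2 ^ (xs ! 0))"
proof -
  have c: "cmp Or (Suc 0) pow2p (\<lambda>xs. primR (\<lambda>xs. 1) (\<lambda>xs. xs ! 1 * 2) (hd xs) (tl xs))"
    unfolding pow2p_def
    by (rule cmp_Prim[OF cmp_const]) (rule cmp_mult[OF cmp_Proj1 cmp_const])
  have r: "primR (\<lambda>xs. 1) (\<lambda>xs. xs ! 1 * 2) n xs = 2 ^ n" for n xs
    by (induction n) auto
  show ?thesis
    by (rule cmp_cong[OF c]) (auto simp: r r[simplified] length_Suc_conv)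
qed

lemma cmp_pow2: "cmp Or k a A \<Longrightarrow> cmp Or k (Comp pow2p [a]) (\<lambda>xs. 2 ^ A xs)"
  using cmp_Comp1[OF cmp_pow2p] by simp

definition trip :: recf where "trip = Prim Zf (Comp addp [Proj 1, Comp Sf [Proj 0]])"

lemma cmp_trip: "cmp Or (Suc 0) trip (\<lambda>xs. triangle (xs ! 0))"
proof -
  have c: "cmp Or (Suc 0) trip (\<lambda>xs. primR (\<lambda>xs. 0) (\<lambda>xs. xs ! 1 + Suc (xs ! 0)) (hd xs) (tl xs))"
    unfolding trip_def
    by (rule cmp_Prim[OF cmp_Zf]) (rule cmp_cong[OF cmp_add[OF cmp_Proj1 cmp_Comp1[OF cmp_Sf cmp_Proj0]]], simp)
  have r: "primR (\<lambda>xs. 0) (\<lambda>xs. xs ! 1 + Suc (xs ! 0)) n xs = triangle n" for n xs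
    by (induction n) auto
  show ?thesis
    by (rule cmp_cong[OF c]) (auto simp: r r[simplified] length_Suc_conv)
qed

lemma cmp_tri: "cmp Or k a A \<Longrightarrow> cmp Or k (Comp trip [a]) (\<lambda>xs. triangle (A xs))"
  using cmp_Comp1[OF cmp_trip] by simp

lemma cmp_orc: "cmp Or k a A \<Longrightarrow> cmp Or k (Comp Orc [a]) (\<lambda>xs. if Or (A xs) then 1 else 0)"
  using cmp_Comp1[OF cmp_Orc] by simp

definition bsum :: "nat \<Rightarrow> recf \<Rightarrow> recf" where
  "bsum k body = Prim Zf (Comp addp [Proj 1, Comp body (Proj 0 # map (\<lambda>j. Proj (j + 2)) [0..<k])])"

lemma la2_projs: "list_all2 (\<lambda>g G. cmp Or (Suc (Suc k)) g G) (map (\<lambda>j. Proj (j + 2)) [0..<k]) (map (\<lambda>j xs. xs ! (j + 2)) [0..<k])"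
  by (auto simp: list_all2_conv_all_nth intro!: cmp_Proj)

lemma map_projs: "length xs = Suc (Suc k) \<Longrightarrow> map (\<lambda>G. G xs) (map (\<lambda>j xs. xs ! (j + 2)) [0..<k]) = drop 2 xs"
  by (auto simp: list_eq_iff_nth_eq)

lemma cmp_bsum:
  assumes "cmp Or (Suc k) body Bd"
  shows "cmp Or (Suc k) (bsum k body) (\<lambda>xs. \<Sum>i<hd xs. Bd (i # tl xs))"
proof -
  have cb: "cmp Or (Suc (Suc k)) (Comp body (Proj 0 # map (\<lambda>j. Proj (j + 2)) [0..<k]))
      (\<lambda>xs. Bd (map (\<lambda>G. G xs) ((\<lambda>xs. xs ! 0) # map (\<lambda>j xs. xs ! (j + 2)) [0..<k])))"
    by (rule cmp_Comp) (use assms la2_projs cmp_Proj0 in auto)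
  have cb2: "cmp Or (Suc (Suc k)) (Comp body (Proj 0 # map (\<lambda>j. Proj (j + 2)) [0..<k]))
      (\<lambda>xs. Bd (xs ! 0 # drop 2 xs))"
  proof (rule cmp_cong[OF cb])
    fix xs :: "nat list" assume l: "length xs = Suc (Suc k)"
    show "Bd (map (\<lambda>G. G xs) ((\<lambda>xs. xs ! 0) # map (\<lambda>j xs. xs ! (j + 2)) [0..<k])) = Bd (xs ! 0 # drop 2 xs)"
      using map_projs[OF l] by simp
  qed
  have c: "cmp Or (Suc k) (bsum k body) (\<lambda>xs. primR (\<lambda>xs. 0) (\<lambda>xs. xs ! 1 + Bd (xs ! 0 # drop 2 xs)) (hd xs) (tl xs))"
    unfolding bsum_def
    by (rule cmp_Prim[OF cmp_Zf]) (rule cmp_add[OF cmp_Proj1 cb2])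
  have r: "primR (\<lambda>xs. 0) (\<lambda>xs. xs ! 1 + Bd (xs ! 0 # drop 2 xs)) n xs = (\<Sum>i<n. Bd (i # xs))" for n xs
    by (induction n) auto
  show ?thesis
    by (rule cmp_cong[OF c]) (simp add: r r[simplified])
qed


fun strip :: "recf \<Rightarrow> recf" where
  "strip Zf = Zf"
| "strip Sf = Sf"
| "strip (Proj i) = Proj i"
| "strip (Comp f gs) = Comp (strip f) (map strip gs)"
| "strip (Prim f g) = Prim (strip f) (strip g)"
| "strip (Mn f) = Mn (strip f)"
| "strip Orc = Comp Zf [Proj 0]"

lemma strip1: "evalr no_oracle r xs y \<Longrightarrow> evalr Or (strip r) xs y"
proof (induction rule: evalr.induct)
  case (zero xs) then show ?case by (auto intro: evalr.zero)
next
  case (succ x xs) then show ?case by (auto intro: evalr.succ)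
next
  case (proj i xs) then show ?case by (auto intro: evalr.proj)
next
  case (orc x xs)
  have "evalr Or (Proj 0) (x # xs) x" using evalr.proj[of 0 "x # xs" Or] by simp
  then have "list_all2 (\<lambda>g y. evalr Or g (x # xs) y) [Proj 0] [x]" by simp
  then show ?case by (auto simp: no_oracle_def intro: evalr.comp evalr.zero)
next
  case (comp xs gs ys f z)
  have "list_all2 (\<lambda>g y. evalr Or g xs y) (map strip gs) ys"
    using comp(1) by (auto simp: list_all2_map1 elim: list_all2_mono)
  then show ?case using comp by (auto intro: evalr.comp)
next
  case (prim0 f xs y g) then show ?case by (auto intro: evalr.prim0)
next
  case (primS f g n xs y z) then show ?case by (auto intro: evalr.primS)
next
  case (mn f n xs) then show ?case by (auto intro: evalr.mn)
qed

lemma strip2: "evalr Or r' xs y \<Longrightarrow> (\<And>r. r' = strip r \<Longrightarrow> evalr no_oracle r xs y)"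
proof (induction arbitrary: rule: evalr.induct)
  case (zero xs) then show ?case by (cases r) (auto intro: evalr.zero)
next
  case (succ x xs) then show ?case by (cases r) (auto intro: evalr.succ)
next
  case (proj i xs) then show ?case by (cases r) (auto intro: evalr.proj)
next
  case (orc x xs) then show ?case by (cases r) auto
next
  case (comp xs gs ys f z)
  show ?case
  proof (cases r)
    case Orc
    then have fg: "f = Zf" "gs = [Proj 0]" using comp.prems by auto
    then obtain y1 where "ys = [y1]" "evalr Or (Proj 0) xs y1" using comp(1)
      by (auto simp: list_all2_Cons1)
    then have "0 < length xs" by (auto elim!: evP)
    then obtain x xs' where "xs = x # xs'" by (cases xs) auto
    moreover have "evalr Or f ys z" using comp by blast
    then have "z = 0" using fg by (auto elim: evZ)
    ultimately show ?thesis using Orc evalr.orc[of no_oracle x xs'] by (simp add: no_oracle_def)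
  next
    case (Comp f0 gs0)
    then have fg: "f = strip f0" "gs = map strip gs0" using comp.prems by auto
    have "list_all2 (\<lambda>g y. evalr no_oracle g xs y) gs0 ys"
      using comp(1) fg by (auto simp: list_all2_map1 elim: list_all2_mono)
    then show ?thesis using comp fg Comp by (auto intro: evalr.comp)
  qed (use comp.prems in auto)
next
  case (prim0 f xs y g) then show ?case by (cases r) (auto intro: evalr.prim0)
next
  case (primS f g n xs y z)
  then show ?case
  proof (cases r)
    case (Prim f0 g0)
    then show ?thesis using primS by (auto intro!: evalr.primS[of no_oracle f0 g0 n xs y])
  qed auto
next
  case (mn f n xs)
  then show ?case
  proof (cases r)
    case (Mn f0)
    then have f: "f = strip f0" using mn by auto
    have a: "evalr no_oracle f0 (n # xs) 0" using mn f by blast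
    have b: "\<forall>m<n. \<exists>k. evalr no_oracle f0 (m # xs) (Suc k)" using mn(3) f by blast
    show ?thesis using Mn evalr.mn[OF a b] by simp
  qed auto
qed

lemma strip_iff: "evalr Or (strip r) xs y \<longleftrightarrow> evalr no_oracle r xs y"
  using strip1 strip2 by blast

lemma tc_cmp:
  assumes "total_comp_str_nat_nat no_oracle F"
  shows "\<exists>r. \<forall>Or. cmp Or (Suc (Suc 0)) r (\<lambda>xs. F (dec (xs ! 0)) (xs ! 1))"
proof -
  obtain r where r: "\<forall>x t y. evalr no_oracle r [enc x, t] y \<longleftrightarrow> y = F x t"
    using assms unfolding total_comp_str_nat_nat_def by blast
  have "cmp Or (Suc (Suc 0)) (strip r) (\<lambda>xs. F (dec (xs ! 0)) (xs ! 1))" for Or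
    unfolding cmp_def
  proof (intro allI impI)
    fix xs :: "nat list" and y assume "length xs = Suc (Suc 0)"
    then obtain i t where xs: "xs = [i, t]" by (auto simp: length_Suc_conv)
    show "evalr Or (strip r) xs y = (y = F (dec (xs ! 0)) (xs ! 1))"
      using r[rule_format, of "dec i" t y] xs by (simp add: strip_iff)
  qed
  then show ?thesis by blast
qed

lemma cmp_tc:
  assumes "cmp Or (Suc (Suc 0)) r (\<lambda>xs. F (dec (xs ! 0)) (xs ! 1))"
  shows "total_comp_str_nat_nat Or F"
  unfolding total_comp_str_nat_nat_def
proof (intro exI allI)
  fix x t y
  show "evalr Or r [enc x, t] y = (y = F x t)" using cmpD[OF assms, of "[enc x, t]" y] by simp
qed


definition ntin :: "nat \<Rightarrow> nat \<Rightarrow> nat" where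
  "ntin i t = 3 * 2 ^ (triangle (i + t) + i) - 1"

definition Tinput :: "nat \<Rightarrow> nat \<Rightarrow> bool list" where
  "Tinput i t = replicate (prod_encode (i, t)) False @ [True]"

lemma enc_Tinput: "enc (Tinput i t) = ntin i t"
  unfolding Tinput_def ntin_def by (simp add: enc_rep prod_encode_def)

lemma rep_prefix: "replicate a False @ [True] = replicate b False @ [True] @ r \<Longrightarrow> a = b \<and> r = []"
proof (induction a arbitrary: b)
  case 0 then show ?case by (cases b) simp_all
next
  case (Suc a)
  show ?case
  proof (cases b)
    case 0 then show ?thesis using Suc.prems by simp
  next
    case (Suc b')
    then have "replicate a False @ [True] = replicate b' False @ [True] @ r" using Suc.prems by simp
    then show ?thesis using Suc.IH Suc by blast
  qed
qed

lemma Tinput_inj: assumes "Tinput i t = Tinput i' t'" shows "i = i' \<and> t = t'"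
proof -
  have "replicate (prod_encode (i, t)) False @ [True] = replicate (prod_encode (i', t')) False @ [True] @ []"
    using assms unfolding Tinput_def by simp
  then have "prod_encode (i, t) = prod_encode (i', t')" by (rule conjunct1[OF rep_prefix])
  then show ?thesis by (simp only: prod_encode_eq prod.inject)
qed

definition ntinp :: "recf \<Rightarrow> recf \<Rightarrow> recf" where
  "ntinp a b = Comp subp0 [constp 1, Comp mulp [constp 3, Comp pow2p [Comp addp [Comp trip [Comp addp [a, b]], a]]]]"

lemma cmp_ntin: "cmp Or k a A \<Longrightarrow> cmp Or k b B \<Longrightarrow> cmp Or k (ntinp a b) (\<lambda>xs. ntin (A xs) (B xs))"
  unfolding ntinp_def ntin_def
  by (rule cmp_sub[OF cmp_mult[OF cmp_const cmp_pow2[OF cmp_add[OF cmp_tri[OF cmp_add]]]] cmp_const])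

definition unstable :: "(bool list \<Rightarrow> nat \<Rightarrow> bool list) \<Rightarrow> nat \<Rightarrow> nat \<Rightarrow> bool" where
  "unstable g i t \<longleftrightarrow> (\<exists>t'\<ge>t. g (dec i) t' \<noteq> g (dec i) t)"

definition Tm :: "(bool list \<Rightarrow> nat \<Rightarrow> bool list) \<Rightarrow> bool list \<Rightarrow> bool list option" where
  "Tm g s = (if \<exists>i t. s = Tinput i t \<and> unstable g i t then Some [] else None)"

lemma Tm_pf: "prefix_free_dom (Tm g)"
  unfolding prefix_free_dom_def
proof (intro allI impI)
  fix p q assume p: "Tm g p \<noteq> None" and q: "Tm g q \<noteq> None" and "\<exists>r. q = p @ r"
  then obtain r where r: "q = p @ r" by blast
  obtain i t where pi: "p = Tinput i t" using p unfolding Tm_def by (auto split: if_splits)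
  obtain i' t' where qi: "q = Tinput i' t'" using q unfolding Tm_def by (auto split: if_splits)
  have "replicate (prod_encode (i', t')) False @ [True] = replicate (prod_encode (i, t)) False @ [True] @ r"
    using r pi qi unfolding Tinput_def by simp
  then have "r = []" using rep_prefix by blast
  then show "p = q" using r by simp
qed

lemma Tm_Tinput: "Tm g (Tinput i t) \<noteq> None \<longleftrightarrow> unstable g i t"
  unfolding Tm_def using Tinput_inj by auto

lemma cmp_Comp_list: "cmp Or n h H \<Longrightarrow> length gs = n \<Longrightarrow> list_all2 (\<lambda>g G. cmp Or k g G) gs Gs \<Longrightarrow>
   (\<And>xs. length xs = k \<Longrightarrow> H (map (\<lambda>G. G xs) Gs) = R xs) \<Longrightarrow> cmp Or k (Comp h gs) R"
  by (rule cmp_cong[OF cmp_Comp]) auto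

context
  fixes g :: "bool list \<Rightarrow> nat \<Rightarrow> bool list" and rg :: recf
  assumes rg: "\<And>Or. cmp Or (Suc (Suc 0)) rg (\<lambda>xs. enc (g (dec (xs ! 0)) (xs ! 1)))"
begin

definition Gn :: "nat \<Rightarrow> nat \<Rightarrow> nat" where "Gn i t = enc (g (dec i) t)"

lemma cmp_G: "cmp Or k a A \<Longrightarrow> cmp Or k b B \<Longrightarrow> cmp Or k (Comp rg [a, b]) (\<lambda>xs. Gn (A xs) (B xs))"
  using cmp_Comp2[OF rg] by (simp add: Gn_def)

definition bodyF :: "nat \<Rightarrow> nat \<Rightarrow> nat \<Rightarrow> nat \<Rightarrow> nat" where
  "bodyF n i t d = (if n = ntin i t then 1 else 0) * (if Gn i (t + d) = Gn i t then 0 else 1)"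

definition body3 :: recf where
  "body3 = Comp mulp [eqp (Proj 4) (ntinp (Proj 2) (Proj 1)),
     notp (eqp (Comp rg [Proj 2, Comp addp [Proj 1, Proj 0]]) (Comp rg [Proj 2, Proj 1]))]"

lemma cmp_body3': "cmp Or (Suc (Suc (Suc (Suc (Suc 0))))) body3 (\<lambda>xs. bodyF (xs ! 4) (xs ! 2) (xs ! 1) (xs ! 0))"
  unfolding body3_def bodyF_def
  by (rule cmp_cong[OF cmp_mult[OF cmp_eq[OF cmp_Proj4 cmp_ntin[OF cmp_Proj2 cmp_Proj1]]
     cmp_not[OF cmp_eq[OF cmp_G[OF cmp_Proj2 cmp_add[OF cmp_Proj1 cmp_Proj0]] cmp_G[OF cmp_Proj2 cmp_Proj1]]]]])
   simp

lemma cmp_body3: "cmp Or (Suc 4) body3 (\<lambda>xs. bodyF (xs ! 4) (xs ! 2) (xs ! 1) (xs ! 0))"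
  using cmp_body3' by (simp add: numeral_eq_Suc)

definition L3 :: recf where "L3 = Comp (bsum 4 body3) [Proj 2, Proj 0, Proj 1, Proj 2, Proj 3]"

lemma cmp_L3: "cmp Or (Suc 3) L3 (\<lambda>xs. \<Sum>d<xs ! 2. bodyF (xs ! 3) (xs ! 1) (xs ! 0) d)"
proof -
  have b: "cmp Or (Suc 4) (bsum 4 body3)
     (\<lambda>xs. \<Sum>i<hd xs. bodyF ((i # tl xs) ! 4) ((i # tl xs) ! 2) ((i # tl xs) ! 1) ((i # tl xs) ! 0))"
    using cmp_bsum[OF cmp_body3] by simp
  have l: "list_all2 (\<lambda>g G. cmp Or (Suc 3) g G) [Proj 2, Proj 0, Proj 1, Proj 2, Proj 3]
     [\<lambda>xs. xs ! 2, \<lambda>xs. xs ! 0, \<lambda>xs. xs ! 1, \<lambda>xs. xs ! 2, \<lambda>xs. xs ! 3]"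
    by (simp add: cmp_Proj)
  show ?thesis unfolding L3_def
    by (rule cmp_Comp_list[OF b _ l]) simp_all
qed

definition L2 :: recf where "L2 = Comp (bsum 3 L3) [Proj 1, Proj 0, Proj 1, Proj 2]"

lemma cmp_L2: "cmp Or (Suc 2) L2 (\<lambda>xs. \<Sum>t<xs ! 1. \<Sum>d<xs ! 1. bodyF (xs ! 2) (xs ! 0) t d)"
proof -
  have b: "cmp Or (Suc 3) (bsum 3 L3)
     (\<lambda>xs. \<Sum>i<hd xs. \<Sum>d<(i # tl xs) ! 2. bodyF ((i # tl xs) ! 3) ((i # tl xs) ! 1) ((i # tl xs) ! 0) d)"
    using cmp_bsum[OF cmp_L3] by simp
  have l: "list_all2 (\<lambda>g G. cmp Or (Suc 2) g G) [Proj 1, Proj 0, Proj 1, Proj 2]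
     [\<lambda>xs. xs ! 1, \<lambda>xs. xs ! 0, \<lambda>xs. xs ! 1, \<lambda>xs. xs ! 2]"
    by (simp add: cmp_Proj)
  show ?thesis unfolding L2_def
    by (rule cmp_Comp_list[OF b _ l]) simp_all
qed

definition L1 :: recf where "L1 = Comp (bsum 2 L2) [Proj 0, Proj 0, Proj 1]"

definition L1F :: "nat \<Rightarrow> nat \<Rightarrow> nat" where
  "L1F j n = (\<Sum>i<j. \<Sum>t<j. \<Sum>d<j. bodyF n i t d)"

lemma cmp_L1: "cmp Or (Suc (Suc 0)) L1 (\<lambda>xs. L1F (xs ! 0) (xs ! 1))"
proof -
  have b: "cmp Or (Suc 2) (bsum 2 L2)
     (\<lambda>xs. \<Sum>i<hd xs. \<Sum>t<(i # tl xs) ! 1. \<Sum>d<(i # tl xs) ! 1. bodyF ((i # tl xs) ! 2) ((i # tl xs) ! 0) t d)"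
    using cmp_bsum[OF cmp_L2] by simp
  have l: "list_all2 (\<lambda>g G. cmp Or (Suc (Suc 0)) g G) [Proj 0, Proj 0, Proj 1]
     [\<lambda>xs. xs ! 0, \<lambda>xs. xs ! 0, \<lambda>xs. xs ! 1]"
    by (simp add: cmp_Proj)
  show ?thesis unfolding L1_def L1F_def
    by (rule cmp_Comp_list[OF b _ l]) simp_all
qed

end


lemma comp_zf_sem: "evalr Or (Comp Zf [r]) xs y \<longleftrightarrow> y = 0 \<and> (\<exists>v. evalr Or r xs v)"
proof
  assume "evalr Or (Comp Zf [r]) xs y"
  then show "y = 0 \<and> (\<exists>v. evalr Or r xs v)" by (auto elim!: evC evZ simp: list_all2_Cons1)
next
  assume "y = 0 \<and> (\<exists>v. evalr Or r xs v)"
  then obtain v where "y = 0" "evalr Or r xs v" by blast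
  then show "evalr Or (Comp Zf [r]) xs y" by (auto intro!: evalr.comp evalr.zero)
qed

context
  fixes g :: "bool list \<Rightarrow> nat \<Rightarrow> bool list" and rg :: recf
  assumes rg: "\<And>Or. cmp Or (Suc (Suc 0)) rg (\<lambda>xs. enc (g (dec (xs ! 0)) (xs ! 1)))"
begin

definition Tp :: recf where "Tp = Comp Zf [Mn (notp (L1 rg))]"

lemma L1F_nz: "L1F g j n \<noteq> 0 \<longleftrightarrow> (\<exists>i<j. \<exists>t<j. \<exists>d<j. n = ntin i t \<and> Gn g i (t + d) \<noteq> Gn g i t)"
proof -
  have b: "bodyF g n i t d = 0 \<longleftrightarrow> \<not> (n = ntin i t \<and> Gn g i (t + d) \<noteq> Gn g i t)" for i t d
    unfolding bodyF_def[OF rg] by auto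
  have "L1F g j n = 0 \<longleftrightarrow> (\<forall>i<j. \<forall>t<j. \<forall>d<j. bodyF g n i t d = 0)"
    unfolding L1F_def[OF rg] by (simp add: lessThan_iff Ball_def)
  then show ?thesis using b by simp
qed

lemma ex_L1F: "(\<exists>j. L1F g j n \<noteq> 0) \<longleftrightarrow> (\<exists>i t d. n = ntin i t \<and> Gn g i (t + d) \<noteq> Gn g i t)"
proof
  assume "\<exists>j. L1F g j n \<noteq> 0" then show "\<exists>i t d. n = ntin i t \<and> Gn g i (t + d) \<noteq> Gn g i t"
    using L1F_nz by blast
next
  assume "\<exists>i t d. n = ntin i t \<and> Gn g i (t + d) \<noteq> Gn g i t"
  then obtain i t d where "n = ntin i t" "Gn g i (t + d) \<noteq> Gn g i t" by blast
  moreover have "i < Suc (i + t + d) \<and> t < Suc (i + t + d) \<and> d < Suc (i + t + d)" by simp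
  ultimately have "L1F g (Suc (i + t + d)) n \<noteq> 0" unfolding L1F_nz by blast
  then show "\<exists>j. L1F g j n \<noteq> 0" by blast
qed

lemma Tp_sem: "evalr Or Tp [n] y \<longleftrightarrow> y = 0 \<and> (\<exists>j. L1F g j n \<noteq> 0)"
proof -
  have F: "cmp Or (Suc (Suc 0)) (notp (L1 rg)) (\<lambda>xs. if L1F g (xs ! 0) (xs ! 1) = 0 then 1 else 0)"
    by (rule cmp_not[OF cmp_L1[OF rg]])
  have "(\<exists>v. evalr Or (Mn (notp (L1 rg))) [n] v) \<longleftrightarrow> (\<exists>j. L1F g j n \<noteq> 0)"
  proof
    assume "\<exists>v. evalr Or (Mn (notp (L1 rg))) [n] v"
    then show "\<exists>j. L1F g j n \<noteq> 0" using Mn_sem[OF F, of "[n]"] by (auto split: if_splits)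
  next
    assume "\<exists>j. L1F g j n \<noteq> 0"
    then obtain j where j: "L1F g j n \<noteq> 0" "\<forall>m<j. L1F g m n = 0"
      using exists_least_iff[of "\<lambda>j. L1F g j n \<noteq> 0"] by blast
    then have "evalr Or (Mn (notp (L1 rg))) [n] j" using Mn_sem[OF F, of "[n]"] by auto
    then show "\<exists>v. evalr Or (Mn (notp (L1 rg))) [n] v" by blast
  qed
  then show ?thesis unfolding Tp_def comp_zf_sem by blast
qed

lemma Tm_dom: "Tm g s \<noteq> None \<longleftrightarrow> (\<exists>j. L1F g j (enc s) \<noteq> 0)"
proof -
  have "(\<exists>j. L1F g j (enc s) \<noteq> 0) \<longleftrightarrow> (\<exists>i t d. enc s = ntin i t \<and> Gn g i (t + d) \<noteq> Gn g i t)"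
    by (rule ex_L1F)
  also have "\<dots> \<longleftrightarrow> (\<exists>i t. s = Tinput i t \<and> unstable g i t)"
  proof -
    have e: "enc s = ntin i t \<longleftrightarrow> s = Tinput i t" for i t
      using enc_Tinput[of i t] enc_inj by metis
    have u: "(\<exists>d. Gn g i (t + d) \<noteq> Gn g i t) \<longleftrightarrow> unstable g i t" for i t
    proof
      assume "\<exists>d. Gn g i (t + d) \<noteq> Gn g i t"
      then obtain d where "g (dec i) (t + d) \<noteq> g (dec i) t" unfolding Gn_def[OF rg] by metis
      then show "unstable g i t" unfolding unstable_def by (intro exI[of _ "t + d"]) simp
    next
      assume "unstable g i t"
      then obtain t' where "t' \<ge> t" "g (dec i) t' \<noteq> g (dec i) t" unfolding unstable_def by blast
      then show "\<exists>d. Gn g i (t + d) \<noteq> Gn g i t" unfolding Gn_def[OF rg]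
        by (intro exI[of _ "t' - t"]) (auto dest: enc_inj)
    qed
    show ?thesis using e u by blast
  qed
  finally show ?thesis unfolding Tm_def by auto
qed

lemma Tm_comp: "partial_comp_str no_oracle (Tm g)"
  unfolding partial_comp_str_def
proof (intro exI[of _ Tp] allI)
  fix x y
  show "evalr no_oracle Tp [enc x] y = (\<exists>s. Tm g x = Some s \<and> y = enc s)"
    unfolding Tp_sem Tm_dom[symmetric] by (auto simp: Tm_def)
qed

lemma halting_query:
  assumes U: "universal_pf_machine U"
  shows "\<exists>qp. cmp (halting_seq U) (Suc (Suc 0)) qp (\<lambda>xs. if unstable g (xs ! 0) (xs ! 1) then 1 else 0)"
proof -
  obtain w where w: "\<forall>x. U (w @ x) = Tm g x"
    using U Tm_comp Tm_pf unfolding universal_pf_machine_def by blast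
  define qp where "qp = Comp Orc [Comp addp [constp (enc w), Comp mulp [constp (2 ^ length w), ntinp (Proj 0) (Proj 1)]]]"
  have c: "cmp (halting_seq U) (Suc (Suc 0)) qp
     (\<lambda>xs. if halting_seq U (enc w + 2 ^ length w * ntin (xs ! 0) (xs ! 1)) then 1 else 0)"
    unfolding qp_def
    by (rule cmp_orc[OF cmp_add[OF cmp_const cmp_mult[OF cmp_const cmp_ntin[OF cmp_Proj0 cmp_Proj1]]]])
  have h: "halting_seq U (enc w + 2 ^ length w * ntin i t) \<longleftrightarrow> unstable g i t" for i t
  proof -
    have "enc w + 2 ^ length w * ntin i t = enc (w @ Tinput i t)" by (simp add: enc_append enc_Tinput)
    then show ?thesis unfolding halting_seq_def using w Tm_Tinput by simp
  qed
  show ?thesis using c h by auto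
qed

end


lemma sum_infsum_swap:
  fixes f :: "'z \<Rightarrow> 'a \<Rightarrow> real"
  assumes "finite F" "\<And>z. z \<in> F \<Longrightarrow> f z summable_on A"
  shows "(\<lambda>i. \<Sum>z\<in>F. f z i) summable_on A \<and> (\<Sum>z\<in>F. infsum (f z) A) = infsum (\<lambda>i. \<Sum>z\<in>F. f z i) A"
  using assms
proof (induction F rule: finite_induct)
  case empty then show ?case by simp
next
  case (insert z F)
  have s1: "f z summable_on A" using insert by simp
  have s2: "(\<lambda>i. \<Sum>z\<in>F. f z i) summable_on A" using insert by simp
  have "(\<lambda>i. f z i + (\<Sum>z\<in>F. f z i)) summable_on A" by (rule summable_on_add[OF s1 s2])
  moreover have "infsum (\<lambda>i. f z i + (\<Sum>z\<in>F. f z i)) A = infsum (f z) A + infsum (\<lambda>i. \<Sum>z\<in>F. f z i) A"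
    by (rule infsum_add[OF s1 s2])
  ultimately show ?case using insert by simp
qed

lemma series_limit:
  fixes w :: "nat \<Rightarrow> nat \<Rightarrow> real" and f :: "nat \<Rightarrow> real"
  assumes w0: "\<And>i s. 0 \<le> w i s" and wf: "\<And>i s. w i s \<le> f i"
    and lim: "\<And>i. (\<lambda>s. w i s) \<longlonglongrightarrow> f i"
    and fs: "f summable_on UNIV"
  shows "(\<lambda>s. \<Sum>i<s. w i s) \<longlonglongrightarrow> infsum f UNIV"
proof (rule LIMSEQ_I)
  fix r :: real assume r: "0 < r"
  have f0: "0 \<le> f i" for i using w0 wf order_trans by blast
  obtain F where F: "finite F" "dist (sum f F) (infsum f UNIV) \<le> r / 2"
    using infsum_finite_approximation[OF fs, of "r/2"] r by auto
  have ev: "\<forall>\<^sub>F s in sequentially. dist (\<Sum>i\<in>F. w i s) (\<Sum>i\<in>F. f i) < r / 2"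
  proof -
    have "(\<lambda>s. \<Sum>i\<in>F. w i s) \<longlonglongrightarrow> (\<Sum>i\<in>F. f i)" by (rule tendsto_sum) (use lim in auto)
    moreover have "r / 2 > 0" using r by simp
    ultimately show ?thesis unfolding tendsto_iff by blast
  qed
  then obtain N1 where N1: "\<And>s. s \<ge> N1 \<Longrightarrow> dist (\<Sum>i\<in>F. w i s) (\<Sum>i\<in>F. f i) < r / 2"
    by (auto simp: eventually_sequentially)
  define N where "N = max N1 (Suc (Max (insert 0 F)))"
  show "\<exists>no. \<forall>n\<ge>no. norm ((\<Sum>i<n. w i n) - infsum f UNIV) < r"
  proof (intro exI[of _ N] allI impI)
    fix s assume s: "N \<le> s"
    have Fs: "F \<subseteq> {..<s}"
    proof
      fix i assume "i \<in> F"
      then have "i \<le> Max (insert 0 F)" using F(1) by simp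
      then show "i \<in> {..<s}" using s unfolding N_def by auto
    qed
    have up: "(\<Sum>i<s. w i s) \<le> infsum f UNIV"
    proof -
      have "(\<Sum>i<s. w i s) \<le> (\<Sum>i<s. f i)" by (rule sum_mono) (use wf in auto)
      also have "\<dots> \<le> infsum f UNIV" by (rule finite_sum_le_infsum[OF fs]) (use f0 in auto)
      finally show ?thesis .
    qed
    have low1: "(\<Sum>i\<in>F. w i s) \<le> (\<Sum>i<s. w i s)"
      by (rule sum_mono2) (use Fs w0 in auto)
    have low2: "(\<Sum>i\<in>F. f i) - r / 2 < (\<Sum>i\<in>F. w i s)"
    proof -
      have "N1 \<le> s" using s unfolding N_def by auto
      then have "\<bar>(\<Sum>i\<in>F. w i s) - (\<Sum>i\<in>F. f i)\<bar> < r / 2" using N1[of s] unfolding dist_real_def by blast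
      then show ?thesis by linarith
    qed
    have low3: "infsum f UNIV - r / 2 \<le> (\<Sum>i\<in>F. f i)"
      using F(2) unfolding dist_real_def by linarith
    show "norm ((\<Sum>i<s. w i s) - infsum f UNIV) < r"
      using up low1 low2 low3 r by auto
  qed
qed


context
  fixes g :: "bool list \<Rightarrow> nat \<Rightarrow> bool list" and rg :: recf
    and Or :: "nat \<Rightarrow> bool" and qp :: recf
    and a b :: "bool list \<Rightarrow> nat \<Rightarrow> nat" and ra rb :: recf
  assumes rg: "\<And>Or. cmp Or (Suc (Suc 0)) rg (\<lambda>xs. enc (g (dec (xs ! 0)) (xs ! 1)))"
    and qp: "cmp Or (Suc (Suc 0)) qp (\<lambda>xs. if unstable g (xs ! 0) (xs ! 1) then 1 else 0)"
    and ra: "cmp Or (Suc (Suc 0)) ra (\<lambda>xs. a (dec (xs ! 0)) (xs ! 1))"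
    and rb: "cmp Or (Suc (Suc 0)) rb (\<lambda>xs. b (dec (xs ! 0)) (xs ! 1))"
begin

definition condF :: "nat \<Rightarrow> nat \<Rightarrow> nat \<Rightarrow> bool" where
  "condF zn i s \<longleftrightarrow> i \<noteq> 0 \<and> (\<exists>t<s. \<not> unstable g i t \<and> enc (g (dec i) t) = zn)"

definition denF :: "nat \<Rightarrow> nat \<Rightarrow> nat" where
  "denF j s = (\<Prod>i<j. b (dec i) s + 1)"

fun numF :: "nat \<Rightarrow> nat \<Rightarrow> nat \<Rightarrow> nat" where
  "numF 0 zn s = 0"
| "numF (Suc j) zn s = numF j zn s * (b (dec j) s + 1) + (if condF zn j s then 1 else 0) * a (dec j) s * denF j s"

definition cbody :: recf where
  "cbody = Comp mulp [notp (Comp qp [Proj 1, Proj 0]), eqp (Comp rg [Proj 1, Proj 0]) (Proj 2)]"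

lemma cmp_cbody: "cmp Or (Suc (Suc (Suc 0))) cbody
   (\<lambda>xs. (if unstable g (xs ! 1) (xs ! 0) then 0 else 1) * (if enc (g (dec (xs ! 1)) (xs ! 0)) = xs ! 2 then 1 else 0))"
  unfolding cbody_def
  by (rule cmp_cong[OF cmp_mult[OF cmp_not[OF cmp_Comp2[OF qp cmp_Proj1 cmp_Proj0]]
         cmp_eq[OF cmp_Comp2[OF rg cmp_Proj1 cmp_Proj0] cmp_Proj2]]]) simp

definition cndp :: recf where
  "cndp = Comp mulp [Comp sgp [Proj 0], Comp sgp [Comp (bsum 2 cbody) [Proj 2, Proj 0, Proj 1]]]"

lemma cmp_cndp: "cmp Or (Suc (Suc (Suc 0))) cndp (\<lambda>xs. if condF (xs ! 1) (xs ! 0) (xs ! 2) then 1 else 0)"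
proof -
  have b: "cmp Or (Suc 2) (bsum 2 cbody) (\<lambda>xs. \<Sum>t<hd xs. (if unstable g ((t # tl xs) ! 1) t then 0 else 1) *
        (if enc (g (dec ((t # tl xs) ! 1)) t) = (t # tl xs) ! 2 then 1 else 0))"
    using cmp_bsum[OF cmp_cbody] by (simp add: numeral_eq_Suc)
  have l: "list_all2 (\<lambda>g G. cmp Or (Suc (Suc (Suc 0))) g G) [Proj 2, Proj 0, Proj 1]
     [\<lambda>xs. xs ! 2, \<lambda>xs. xs ! 0, \<lambda>xs. xs ! 1]"
    by (simp add: cmp_Proj)
  have c: "cmp Or (Suc (Suc (Suc 0))) (Comp (bsum 2 cbody) [Proj 2, Proj 0, Proj 1])
     (\<lambda>xs. \<Sum>t<xs ! 2. (if unstable g (xs ! 0) t then 0 else 1) *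
        (if enc (g (dec (xs ! 0)) t) = xs ! 1 then 1 else 0))"
    by (rule cmp_Comp_list[OF b _ l]) simp_all
  have e: "((\<Sum>t<s. (if unstable g i t then 0 else 1) * (if enc (g (dec i) t) = zn then 1 else 0)) = (0::nat))
      \<longleftrightarrow> \<not> (\<exists>t<s. \<not> unstable g i t \<and> enc (g (dec i) t) = zn)" for s i zn
    by (auto simp: lessThan_iff)
  show ?thesis unfolding cndp_def
    by (rule cmp_cong[OF cmp_mult[OF cmp_sg[OF cmp_Proj0] cmp_sg[OF c]]]) (simp only: e, auto simp: condF_def)
qed

definition denp :: recf where
  "denp = Prim (constp 1) (Comp mulp [Proj 1, Comp Sf [Comp rb [Proj 0, Proj 2]]])"

lemma cmp_denp: "cmp Or (Suc (Suc 0)) denp (\<lambda>xs. denF (xs ! 0) (xs ! 1))"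
proof -
  have c: "cmp Or (Suc (Suc 0)) denp (\<lambda>xs. primR (\<lambda>xs. 1) (\<lambda>xs. xs ! 1 * Suc (b (dec (xs ! 0)) (xs ! 2))) (hd xs) (tl xs))"
    unfolding denp_def
    by (rule cmp_Prim[OF cmp_const]) (rule cmp_cong[OF cmp_mult[OF cmp_Proj1 cmp_Comp1[OF cmp_Sf cmp_Comp2[OF rb cmp_Proj0 cmp_Proj2]]]], simp)
  have r: "primR (\<lambda>xs. 1) (\<lambda>xs. xs ! 1 * Suc (b (dec (xs ! 0)) (xs ! 2))) n [s] = denF n s" for n s
    by (induction n) (auto simp: denF_def)
  show ?thesis
    by (rule cmp_cong[OF c]) (auto simp: r r[simplified] length_Suc_conv)
qed

definition nump :: recf where
  "nump = Prim Zf (Comp addp [Comp mulp [Proj 1, Comp Sf [Comp rb [Proj 0, Proj 3]]],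
     Comp mulp [Comp cndp [Proj 0, Proj 2, Proj 3], Comp mulp [Comp ra [Proj 0, Proj 3], Comp denp [Proj 0, Proj 3]]]])"

lemma cmp_nump: "cmp Or (Suc (Suc (Suc 0))) nump (\<lambda>xs. numF (xs ! 0) (xs ! 1) (xs ! 2))"
proof -
  have c: "cmp Or (Suc (Suc (Suc 0))) nump (\<lambda>xs. primR (\<lambda>xs. 0)
      (\<lambda>xs. xs ! 1 * Suc (b (dec (xs ! 0)) (xs ! 3)) + (if condF (xs ! 2) (xs ! 0) (xs ! 3) then 1 else 0) *
          (a (dec (xs ! 0)) (xs ! 3) * denF (xs ! 0) (xs ! 3))) (hd xs) (tl xs))"
    unfolding nump_def
    by (rule cmp_Prim[OF cmp_Zf]) (rule cmp_cong[OF cmp_add[OF cmp_mult[OF cmp_Proj1 cmp_Comp1[OF cmp_Sf cmp_Comp2[OF rb cmp_Proj0 cmp_Proj3]]]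
       cmp_mult[OF cmp_Comp3[OF cmp_cndp cmp_Proj0 cmp_Proj2 cmp_Proj3] cmp_mult[OF cmp_Comp2[OF ra cmp_Proj0 cmp_Proj3] cmp_Comp2[OF cmp_denp cmp_Proj0 cmp_Proj3]]]]], simp)
  have r: "primR (\<lambda>xs. 0)
      (\<lambda>xs. xs ! 1 * Suc (b (dec (xs ! 0)) (xs ! 3)) + (if condF (xs ! 2) (xs ! 0) (xs ! 3) then 1 else 0) *
          (a (dec (xs ! 0)) (xs ! 3) * denF (xs ! 0) (xs ! 3))) n [zn, s] = numF n zn s" for n zn s
    by (induction n) auto
  show ?thesis
    by (rule cmp_cong[OF c]) (auto simp: r r[simplified] length_Suc_conv)
qed

lemma tc_num: "total_comp_str_nat_nat Or (\<lambda>z s. numF s (enc z) s)"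
proof (rule cmp_tc)
  show "cmp Or (Suc (Suc 0)) (Comp nump [Proj 1, Proj 0, Proj 1]) (\<lambda>xs. numF (xs ! 1) (enc (dec (xs ! 0))) (xs ! 1))"
    by (rule cmp_cong[OF cmp_Comp3[OF cmp_nump cmp_Proj1 cmp_Proj0 cmp_Proj1]]) simp
qed

lemma tc_den: "total_comp_str_nat_nat Or (\<lambda>z s. denF s s - 1)"
proof (rule cmp_tc)
  show "cmp Or (Suc (Suc 0)) (Comp subp0 [constp 1, Comp denp [Proj 1, Proj 1]]) (\<lambda>xs. denF (xs ! 1) (xs ! 1) - 1)"
    by (rule cmp_cong[OF cmp_sub[OF cmp_Comp2[OF cmp_denp cmp_Proj1 cmp_Proj1] cmp_const]]) simp
qed

lemma denF_pos: "denF j s > 0"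
  unfolding denF_def by simp

lemma num_den: "real (numF j zn s) / real (denF j s) =
   (\<Sum>i<j. if condF zn i s then real (a (dec i) s) / real (b (dec i) s + 1) else 0)"
proof (induction j)
  case 0 then show ?case by simp
next
  case (Suc j)
  have d: "denF (Suc j) s = denF j s * (b (dec j) s + 1)" by (simp add: denF_def)
  have p: "real (denF j s) > 0" using denF_pos by simp
  have q: "real (b (dec j) s + 1) > 0" by simp
  have gen: "(N * B + c * A * D) / (D * B) = N / D + c * A / B" if "D > 0" "B > 0" for N B c A D :: real
    using that by (simp add: field_simps)
  have n: "real (numF (Suc j) zn s) = real (numF j zn s) * real (b (dec j) s + 1) +
      (if condF zn j s then 1 else 0) * real (a (dec j) s) * real (denF j s)" by (simp add: algebra_simps)
  have "real (numF (Suc j) zn s) / real (denF (Suc j) s) =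
      real (numF j zn s) / real (denF j s) + (if condF zn j s then 1 else 0) * real (a (dec j) s) / real (b (dec j) s + 1)"
    unfolding n d of_nat_mult by (rule gen[OF p q])
  then show ?case using Suc by simp
qed

end


lemma dec_nil_iff: "dec i = [] \<longleftrightarrow> i = 0"
proof
  assume "dec i = []" then have "enc (dec i) = enc []" by simp
  then show "i = 0" by simp
next
  assume "i = 0" then show "dec i = []" by (simp add: dec.simps)
qed

lemma semi_summable: "semimeasure m \<Longrightarrow> m summable_on UNIV"
proof -
  assume "semimeasure m"
  then have "m summable_on (UNIV - {[]})" unfolding semimeasure_def by blast
  then have "m summable_on insert [] (UNIV - {[]})" by (simp only: summable_on_insert_iff)
  moreover have "insert [] (UNIV - {[]}) = (UNIV :: bool list set)" by auto
  ultimately show ?thesis by simp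
qed

lemma surj_dec: "dec ` UNIV = UNIV"
  by (metis dec_enc surj_def)

lemma inj_dec: "inj dec"
  by (metis enc_dec injI)

lemma dec_summable: "m summable_on UNIV \<Longrightarrow> (m \<circ> dec) summable_on UNIV"
  using summable_on_reindex[OF inj_dec, of m] surj_dec by simp

lemma ind_summable:
  fixes h :: "'a \<Rightarrow> real"
  assumes "h summable_on S"
  shows "(\<lambda>i. if i \<in> S then h i else 0) summable_on UNIV \<and> infsum (\<lambda>i. if i \<in> S then h i else 0) UNIV = infsum h S"
proof
  show "(\<lambda>i. if i \<in> S then h i else 0) summable_on UNIV"
    using summable_on_cong_neutral[of S UNIV h "\<lambda>i. if i \<in> S then h i else 0"] assms by auto
  show "infsum (\<lambda>i. if i \<in> S then h i else 0) UNIV = infsum h S"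
    by (rule infsum_cong_neutral) auto
qed

lemma universal_pos:
  assumes "universal_semimeasure Or mH"
  shows "mH z0 > 0"
proof -
  define q where "q = (\<lambda>z. if z = z0 then (1::real) else 0)"
  have nn: "\<forall>x. q x \<ge> 0" unfolding q_def by simp
  have fin: "sum q F \<le> 1" if "finite F" for F
  proof -
    have "sum q F = sum q (F \<inter> {z0})"
      by (rule sum.mono_neutral_right) (use that in \<open>auto simp: q_def\<close>)
    also have "\<dots> \<le> 1"
    proof (cases "z0 \<in> F")
      case True then have "F \<inter> {z0} = {z0}" by blast
      then show ?thesis by (simp add: q_def)
    next
      case False then have "F \<inter> {z0} = {}" by blast
      then show ?thesis by simp
    qed
    finally show ?thesis .
  qed
  have sq: "q summable_on (UNIV - {[]})"
  proof (rule nonneg_bdd_above_summable_on)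
    show "bdd_above (sum q ` {F. F \<subseteq> UNIV - {[]} \<and> finite F})"
      by (rule bdd_aboveI[of _ 1]) (use fin in blast)
  qed (use nn in blast)
  have sem: "semimeasure q" unfolding semimeasure_def
    using nn sq infsum_le_finite_sums[OF sq fin] by auto
  have tc1: "total_comp_str_nat_nat Or (\<lambda>z t. if enc z = enc z0 then 1 else 0)"
    by (rule cmp_tc[OF cmp_cong[OF cmp_eq[OF cmp_Proj0 cmp_const]]]) simp
  have tc2: "total_comp_str_nat_nat Or (\<lambda>z t. 0)"
    by (rule cmp_tc[OF cmp_Zf])
  have lsc: "lower_semicomp Or q" unfolding lower_semicomp_def
  proof (intro exI conjI allI)
    show "total_comp_str_nat_nat Or (\<lambda>z t. if enc z = enc z0 then 1 else 0)" by (rule tc1)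
    show "total_comp_str_nat_nat Or (\<lambda>z t. 0)" by (rule tc2)
    fix x
    have e: "real (if enc x = enc z0 then 1 else 0) / real (0 + 1) = q x" for t :: nat
      unfolding q_def using enc_inj by auto
    show "incseq (\<lambda>t. real (if enc x = enc z0 then 1 else 0) / real ((\<lambda>z t. 0) x t + 1))"
      by (simp add: incseq_def)
    show "(\<lambda>t. real (if enc x = enc z0 then 1 else 0) / real ((\<lambda>z t. 0) x t + 1)) \<longlonglongrightarrow> q x"
      using e by simp
  qed
  obtain c where "c > 0" "\<forall>x. mH x \<ge> c * q x"
    using assms sem lsc unfolding universal_semimeasure_def by blast
  then have "mH z0 \<ge> c" unfolding q_def by (metis mult.right_neutral)
  then show ?thesis using \<open>c > 0\<close> by linarith
qed


lemma stab_B: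
  fixes g :: "bool list \<Rightarrow> nat \<Rightarrow> bool list" and B :: "bool list \<Rightarrow> bool list"
  assumes lim: "\<forall>x. if (\<exists>v t0. \<forall>t\<ge>t0. g x t = v) then (\<exists>t0. \<forall>t\<ge>t0. g x t = B x) else B x = []"
    and z: "z \<noteq> []"
  shows "B x = z \<longleftrightarrow> (\<exists>t. (\<forall>t'\<ge>t. g x t' = g x t) \<and> g x t = z)"
proof
  assume Bx: "B x = z"
  have ex: "\<exists>v t0. \<forall>t\<ge>t0. g x t = v"
  proof (rule ccontr)
    assume ne: "\<not> (\<exists>v t0. \<forall>t\<ge>t0. g x t = v)"
    have "B x = []" using spec[OF lim, of x] unfolding if_not_P[OF ne] .
    then show False using Bx z by simp
  qed
  have "\<exists>t0. \<forall>t\<ge>t0. g x t = B x" using spec[OF lim, of x] unfolding if_P[OF ex] .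
  then obtain t0 where t0: "\<forall>t\<ge>t0. g x t = B x" by blast
  have gt0: "g x t0 = B x" using t0[rule_format, of t0] by simp
  have "\<forall>t'\<ge>t0. g x t' = g x t0"
  proof (intro allI impI)
    fix t' assume "t0 \<le> t'" then show "g x t' = g x t0" using t0 gt0 by simp
  qed
  then show "\<exists>t. (\<forall>t'\<ge>t. g x t' = g x t) \<and> g x t = z" using Bx \<open>g x t0 = B x\<close> by blast
next
  assume "\<exists>t. (\<forall>t'\<ge>t. g x t' = g x t) \<and> g x t = z"
  then obtain t where t: "\<forall>t'\<ge>t. g x t' = g x t" "g x t = z" by blast
  then have ex: "\<exists>v t0. \<forall>t\<ge>t0. g x t = v" by (intro exI[of _ "g x t"] exI[of _ t])
  have "\<exists>t0. \<forall>t\<ge>t0. g x t = B x" using spec[OF lim, of x] unfolding if_P[OF ex] .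
  then obtain t0 where t0: "\<forall>t\<ge>t0. g x t = B x" by blast
  have "g x (max t t0) = B x" using t0[rule_format, of "max t t0"] by simp
  moreover have "g x (max t t0) = g x t" using t(1)[rule_format, of "max t t0"] by simp
  ultimately show "B x = z" using t(2) by simp
qed

lemma real_bound1:
  fixes X M Y c :: real
  assumes "0 \<le> X" "X \<le> M" "0 < Y" "0 \<le> c" "c \<le> Y / (M + 1)"
  shows "c * X \<le> Y"
proof -
  have M: "0 \<le> M" using assms by linarith
  have "c * X \<le> c * M" using assms by (simp add: mult_left_mono)
  also have "\<dots> \<le> Y / (M + 1) * M" using assms(5) M by (rule mult_right_mono)
  also have "\<dots> \<le> Y" using M assms(3) by (simp add: field_simps)
  finally show ?thesis .
qed

lemma unstable_same:
  assumes "\<not> unstable g i t1" "\<not> unstable g i t2"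
  shows "g (dec i) t1 = g (dec i) t2"
proof -
  have "g (dec i) (max t1 t2) = g (dec i) t1" "g (dec i) (max t1 t2) = g (dec i) t2"
    using assms unfolding unstable_def by (metis max.cobounded1 max.cobounded2)+
  then show ?thesis by simp
qed


theorem mainTheorem6:
  fixes B :: "bool list \<Rightarrow> bool list"
    and U :: "bool list \<Rightarrow> bool list option"
    and m mH :: "bool list \<Rightarrow> real"
  assumes "limit_computable B"
    and "universal_pf_machine U"
    and "universal_semimeasure no_oracle m"
    and "universal_semimeasure (halting_seq U) mH"
  shows "\<exists>c>0. \<forall>z. mH z \<ge> c * infsum m {x. B x = z}"
proof -
  obtain g :: "bool list \<Rightarrow> nat \<Rightarrow> bool list" where g_tc: "total_comp_str_nat_nat no_oracle (\<lambda>x t. enc (g x t))"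
    and g_lim: "\<forall>x. if (\<exists>v t0. \<forall>t\<ge>t0. g x t = v) then (\<exists>t0. \<forall>t\<ge>t0. g x t = B x) else B x = []"
    using assms(1) unfolding limit_computable_def by blast
  obtain rg where rg: "\<forall>Or. cmp Or (Suc (Suc 0)) rg (\<lambda>xs. enc (g (dec (xs ! 0)) (xs ! 1)))"
    using tc_cmp[OF g_tc] by blast
  define H where "H = halting_seq U"
  obtain qp where qp: "cmp H (Suc (Suc 0)) qp (\<lambda>xs. if unstable g (xs ! 0) (xs ! 1) then 1 else 0)"
    using halting_query[of rg g U, OF rg[rule_format] assms(2)] unfolding H_def by blast
  have msem: "semimeasure m" and mlsc: "lower_semicomp no_oracle m"
    using assms(3) unfolding universal_semimeasure_def by auto
  obtain a b where a_tc: "total_comp_str_nat_nat no_oracle a" and b_tc: "total_comp_str_nat_nat no_oracle b"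
    and ab: "\<forall>x. incseq (\<lambda>t. real (a x t) / real (b x t + 1)) \<and> (\<lambda>t. real (a x t) / real (b x t + 1)) \<longlonglongrightarrow> m x"
    using mlsc unfolding lower_semicomp_def by blast
  obtain ra where ra: "\<forall>Or. cmp Or (Suc (Suc 0)) ra (\<lambda>xs. a (dec (xs ! 0)) (xs ! 1))"
    using tc_cmp[OF a_tc] by blast
  obtain rb where rb: "\<forall>Or. cmp Or (Suc (Suc 0)) rb (\<lambda>xs. b (dec (xs ! 0)) (xs ! 1))"
    using tc_cmp[OF b_tc] by blast
  note P = rg[rule_format] qp ra[rule_format] rb[rule_format]
  define r where "r x s = real (a x s) / real (b x s + 1)" for x s
  have r_inc: "incseq (r x)" for x using ab unfolding r_def by blast
  have r_lim: "r x \<longlonglongrightarrow> m x" for x using ab unfolding r_def by blast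
  have r0: "0 \<le> r x s" for x s unfolding r_def by simp
  have r_le: "r x s \<le> m x" for x s by (rule incseq_le[OF r_inc r_lim])
  have m0: "0 \<le> m x" for x using msem unfolding semimeasure_def by blast
  have msum: "m summable_on UNIV" by (rule semi_summable[OF msem])
  have mdsum: "(m \<circ> dec) summable_on UNIV" by (rule dec_summable[OF msum])

  define Iz where "Iz z = {i. i \<noteq> 0 \<and> (\<exists>t. \<not> unstable g i t \<and> g (dec i) t = z)}" for z
  define fz where "fz z i = (if i \<in> Iz z then m (dec i) else 0)" for z i
  define p where "p z = infsum (fz z) UNIV" for z
  have fz0: "0 \<le> fz z i" for z i unfolding fz_def using m0 by simp
  have fz_eq: "fz z = (\<lambda>i. if i \<in> Iz z then (m \<circ> dec) i else 0)" for z
    unfolding fz_def by (simp add: fun_eq_iff)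
  have Iz_sum: "(m \<circ> dec) summable_on Iz z" for z by (rule summable_on_subset[OF mdsum]) simp
  have fz_sum: "fz z summable_on UNIV" and p_eq: "p z = infsum (m \<circ> dec) (Iz z)" for z
    using ind_summable[OF Iz_sum[of z]] unfolding p_def fz_eq by auto
  have p0: "0 \<le> p z" for z unfolding p_def by (rule infsum_nonneg) (rule fz0)
  have Iz_disj: "z1 = z2" if "i \<in> Iz z1" "i \<in> Iz z2" for i z1 z2
    using that unstable_same unfolding Iz_def by blast

  have condF_iff: "condF g (enc z) i s \<longleftrightarrow> i \<noteq> 0 \<and> (\<exists>t<s. \<not> unstable g i t \<and> g (dec i) t = z)" for z i s
    unfolding condF_def[OF P] using enc_inj by metis
  define w where "w z i s = (if condF g (enc z) i s then r (dec i) s else 0)" for z i s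
  have val: "real (numF g a b s (enc z) s) / real (denF b s s - 1 + 1) = (\<Sum>i<s. w z i s)" for z s
  proof -
    have "denF b s s - 1 + 1 = denF b s s" using denF_pos[OF P] by (simp add: Suc_pred)
    then show ?thesis using num_den[OF P, of s "enc z" s] unfolding w_def r_def by simp
  qed
  have w0: "0 \<le> w z i s" for z i s unfolding w_def using r0 by simp
  have w_mono: "w z i s \<le> w z i (Suc s)" for z i s
  proof (cases "condF g (enc z) i s")
    case True
    then have "condF g (enc z) i (Suc s)" unfolding condF_iff using less_Suc_eq by blast
    then show ?thesis using True r_inc unfolding w_def by (simp add: incseq_SucD)
  next
    case False then show ?thesis unfolding w_def using w0 unfolding w_def by simp
  qed
  have w_le: "w z i s \<le> fz z i" for z i s
  proof (cases "condF g (enc z) i s")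
    case True
    then have "i \<in> Iz z" unfolding condF_iff Iz_def by blast
    then show ?thesis using True r_le unfolding w_def fz_def by simp
  next
    case False then show ?thesis unfolding w_def using fz0 by simp
  qed
  have w_lim: "(\<lambda>s. w z i s) \<longlonglongrightarrow> fz z i" for z i
  proof (cases "i \<in> Iz z")
    case True
    then obtain t where t: "i \<noteq> 0" "\<not> unstable g i t" "g (dec i) t = z" unfolding Iz_def by blast
    have ev: "\<forall>\<^sub>F s in sequentially. r (dec i) s = w z i s"
    proof (rule eventually_sequentiallyI[of "Suc t"])
      fix s assume "Suc t \<le> s"
      then have "condF g (enc z) i s" unfolding condF_iff using t by (intro conjI exI[of _ t]) auto
      then show "r (dec i) s = w z i s" unfolding w_def by simp
    qed
    have "(\<lambda>s. r (dec i) s) \<longlonglongrightarrow> fz z i" using r_lim True unfolding fz_def by simp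
    then show ?thesis using tendsto_cong[OF ev] by blast
  next
    case False
    then have "\<not> condF g (enc z) i s" for s unfolding condF_iff Iz_def by blast
    then have "(\<lambda>s. w z i s) = (\<lambda>s. 0)" unfolding w_def by simp
    then show ?thesis using False unfolding fz_def by simp
  qed
  have plsc: "lower_semicomp H p" unfolding lower_semicomp_def
  proof (intro exI conjI allI)
    show "total_comp_str_nat_nat H (\<lambda>z s. numF g a b s (enc z) s)" by (rule tc_num[OF P])
    show "total_comp_str_nat_nat H (\<lambda>z s. denF b s s - 1)" by (rule tc_den[OF P])
    fix z
    show "incseq (\<lambda>s. real (numF g a b s (enc z) s) / real (denF b s s - 1 + 1))"
      unfolding val
    proof (rule incseq_SucI)
      fix s
      have "(\<Sum>i<s. w z i s) \<le> (\<Sum>i<s. w z i (Suc s))" by (rule sum_mono) (rule w_mono)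
      also have "\<dots> \<le> (\<Sum>i<Suc s. w z i (Suc s))" using w0 by simp
      finally show "(\<Sum>i<s. w z i s) \<le> (\<Sum>i<Suc s. w z i (Suc s))" .
    qed
    show "(\<lambda>s. real (numF g a b s (enc z) s) / real (denF b s s - 1 + 1)) \<longlonglongrightarrow> p z"
      unfolding val p_def by (rule series_limit[OF w0 w_le w_lim fz_sum])
  qed

  define h0 where "h0 i = (if i \<in> UNIV - {0} then (m \<circ> dec) i else 0)" for i :: nat
  have s0: "(m \<circ> dec) summable_on (UNIV - {0})" by (rule summable_on_subset[OF mdsum]) simp
  have h0_fun: "h0 = (\<lambda>i. if i \<in> UNIV - {0} then (m \<circ> dec) i else 0)" by (simp add: h0_def fun_eq_iff)
  have h0_sum: "h0 summable_on UNIV"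
    unfolding h0_fun by (rule conjunct1[OF ind_summable[OF s0]])
  have h0_eq: "infsum h0 UNIV = infsum (m \<circ> dec) (UNIV - {0})"
    unfolding h0_fun by (rule conjunct2[OF ind_summable[OF s0]])
  have dec_img: "dec ` (UNIV - {0}) = UNIV - {[]}"
  proof
    show "dec ` (UNIV - {0}) \<subseteq> UNIV - {[]}"
    proof
      fix y assume "y \<in> dec ` (UNIV - {0})"
      then obtain i where "i \<noteq> 0" "y = dec i" by blast
      then have "y \<noteq> []" using dec_nil_iff[of i] by simp
      then show "y \<in> UNIV - {[]}" by simp
    qed
    show "UNIV - {[]} \<subseteq> dec ` (UNIV - {0})"
    proof
      fix x :: "bool list" assume "x \<in> UNIV - {[]}"
      then have "enc x \<in> UNIV - {0}" using dec_nil_iff[of "enc x"] by simp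
      moreover have "x = dec (enc x)" by simp
      ultimately show "x \<in> dec ` (UNIV - {0})" by blast
    qed
  qed
  have h0_le: "infsum h0 UNIV \<le> 1"
  proof -
    have "infsum (m \<circ> dec) (UNIV - {0}) = infsum m (UNIV - {[]})"
      using infsum_reindex[of dec "UNIV - {0}" m] inj_dec dec_img by (simp add: inj_on_def inj_def)
    then show ?thesis using h0_eq msem unfolding semimeasure_def by simp
  qed
  have pt: "(\<Sum>z\<in>F. fz z i) \<le> h0 i" if "finite F" for F i
  proof (cases "\<exists>z0\<in>F. i \<in> Iz z0")
    case True
    then obtain z0 where z0: "z0 \<in> F" "i \<in> Iz z0" by blast
    have "(\<Sum>z\<in>F. fz z i) = fz z0 i + (\<Sum>z\<in>F - {z0}. fz z i)" using sum.remove[OF that z0(1)] by simp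
    also have "(\<Sum>z\<in>F - {z0}. fz z i) = 0"
      using Iz_disj z0 unfolding fz_def by (intro sum.neutral) auto
    finally show ?thesis using z0 unfolding fz_def h0_def Iz_def by simp
  next
    case False
    then have "(\<Sum>z\<in>F. fz z i) = 0" unfolding fz_def by (intro sum.neutral) auto
    then show ?thesis unfolding h0_def using m0 by simp
  qed
  have finsum: "sum p F \<le> 1" if "finite F" for F
  proof -
    have s: "(\<lambda>i. \<Sum>z\<in>F. fz z i) summable_on UNIV"
      using sum_infsum_swap[OF that, of fz UNIV] fz_sum by blast
    have "sum p F = infsum (\<lambda>i. \<Sum>z\<in>F. fz z i) UNIV"
      using sum_infsum_swap[OF that, of fz UNIV] fz_sum unfolding p_def by blast
    also have "\<dots> \<le> infsum h0 UNIV" by (rule infsum_mono[OF s h0_sum]) (rule pt[OF that])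
    finally show ?thesis using h0_le by simp
  qed
  have psum: "p summable_on (UNIV - {[]})"
  proof (rule nonneg_bdd_above_summable_on)
    show "bdd_above (sum p ` {F. F \<subseteq> UNIV - {[]} \<and> finite F})"
      by (rule bdd_aboveI[of _ 1]) (use finsum in blast)
  qed (use p0 in blast)
  have psem: "semimeasure p" unfolding semimeasure_def
    using p0 psum infsum_le_finite_sums[OF psum finsum] by auto

  obtain c1 where c1: "c1 > 0" "\<forall>z. mH z \<ge> c1 * p z"
    using assms(4) psem plsc unfolding universal_semimeasure_def H_def by blast

  have inv: "x \<in> dec ` Iz z \<longleftrightarrow> x \<noteq> [] \<and> B x = z" if z: "z \<noteq> []" for x z
  proof -
    have "x \<in> dec ` Iz z \<longleftrightarrow> enc x \<in> Iz z"
      by (metis dec_enc enc_dec image_iff)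
    also have "\<dots> \<longleftrightarrow> x \<noteq> [] \<and> (\<exists>t. (\<forall>t'\<ge>t. g x t' = g x t) \<and> g x t = z)"
      unfolding Iz_def unstable_def using dec_nil_iff[of "enc x"] by auto
    also have "\<dots> \<longleftrightarrow> x \<noteq> [] \<and> B x = z" using stab_B[OF g_lim z, of x] by simp
    finally show ?thesis .
  qed
  have pz: "infsum m (dec ` Iz z) = p z" for z
    using infsum_reindex[of dec "Iz z" m] inj_dec p_eq[of z] by (simp add: inj_on_def inj_def)
  have sumdec: "m summable_on (dec ` Iz z)" for z by (rule summable_on_subset[OF msum]) simp
  define M0 where "M0 = infsum m UNIV"
  have M0: "0 \<le> M0" unfolding M0_def by (rule infsum_nonneg) (rule m0)
  have mnil: "m [] \<le> M0" unfolding M0_def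
    using finite_sum_le_infsum[OF msum, of "{[]}"] m0 by simp
  have case_nil: "infsum m {x. B x = []} \<le> M0" unfolding M0_def
    by (rule infsum_mono2[OF summable_on_subset[OF msum] msum]) (use m0 in auto)
  have case_ne: "infsum m {x. B x = z} = p z" if "z \<noteq> []" "B [] \<noteq> z" for z
  proof -
    have "{x. B x = z} = dec ` Iz z" using inv[OF that(1)] that(2) by auto
    then show ?thesis using pz by simp
  qed
  have case_B: "infsum m {x. B x = z} = m [] + p z" if "z \<noteq> []" "B [] = z" for z
  proof -
    have "{x. B x = z} = insert [] (dec ` Iz z)" using inv[OF that(1)] that(2) by auto
    moreover have "[] \<notin> dec ` Iz z" using inv[OF that(1)] by blast
    ultimately show ?thesis using infsum_insert[OF sumdec] pz by simp
  qed

  have pos1: "mH [] > 0" and pos2: "mH (B []) > 0" using universal_pos[OF assms(4)] by auto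
  define c where "c = min (c1 / 2) (min (mH [] / (M0 + 1)) (mH (B []) / (2 * (M0 + 1))))"
  have c_pos: "c > 0" unfolding c_def using c1 pos1 pos2 M0 by simp
  have bound: "mH z \<ge> c * infsum m {x. B x = z}" for z
  proof (cases "z = []")
    case True
    have X0: "0 \<le> infsum m {x. B x = []}" by (rule infsum_nonneg) (rule m0)
    have "c \<le> mH [] / (M0 + 1)" unfolding c_def by simp
    then show ?thesis using real_bound1[OF X0 case_nil pos1 less_imp_le[OF c_pos]] True by simp
  next
    case False
    show ?thesis
    proof (cases "B [] = z")
      case False2: False
      have "c \<le> c1 / 2" unfolding c_def by linarith
      then have "c \<le> c1" using c1(1) by linarith
      then have "c * p z \<le> c1 * p z" using p0 by (intro mult_right_mono) auto
      then show ?thesis using case_ne[OF False False2] c1 by (metis order_trans)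
    next
      case True
      have h1: "c * p z \<le> mH z / 2"
      proof -
        have "c \<le> c1 / 2" unfolding c_def by linarith
        then have "c * p z \<le> (c1 / 2) * p z" using p0 by (intro mult_right_mono) auto
        also have "\<dots> \<le> mH z / 2" using c1(2) by simp
        finally show ?thesis .
      qed
      have h2: "c * m [] \<le> mH z / 2"
      proof -
        have "c \<le> (mH z / 2) / (M0 + 1)" unfolding c_def using True by simp
        moreover have "mH z / 2 > 0" using pos2 True by simp
        ultimately show ?thesis using real_bound1[OF m0 mnil _ less_imp_le[OF c_pos]] by blast
      qed
      show ?thesis using case_B[OF False True] h1 h2 by (simp add: distrib_left)
    qed
  qed
  show ?thesis using c_pos bound by blast
qed

end
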